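(* Let $\mathcal{A}$ be a unital $\mathbb{F}$-algebra with $\dim\mathcal{A}=n>4$, let $S$ be a generating set of $\mathcal{A}$, and let $(m_0,m_1,\ldots,m_{n-1})$ be the characteristic sequence of $S$. If $h\in\{4,\ldots,n-1\}$ and $m_h>2^{h-2}$, then $m_h=2^{h-2}+2^{q}$ for some $q\in\{0,\ldots,h-2\}$.
   Context: All algebras are finite-dimensional, unital, not necessarily associative algebras over a field $\mathbb{F}$. For a finite generating set $S$ of $\mathcal{A}$, a word in $S$ is any product (with any bracketing) of finitely many elements of $S$; its length is the number of factors, and $1$ is a word of length $0$. $L_i(S)$ is the linear span of all words in $S$ of length at most $i$ (so $L_0(S)=\mathbb{F}$). The characteristic sequence of $S$ is the non-decreasing sequence of non-negative integers $(m_0,\ldots,m_{n-1})$ constructed as follows: $m_0=0$; with $s_1=\dim L_1(S)-1$, set $m_1=\cdots=m_{s_1}=1$; inductively, if $m_1,\ldots,m_r$ are defined using $L_1(S),\ldots,L_{k-1}(S)$, put $s_k=\dim L_k(S)-\dim L_{k-1}(S)$ and set $m_{r+1}=\cdots=m_{r+s_k}=k$. (Thus each $k\ge1$ occurs exactly $\dim L_k(S)-\dim L_{k-1}(S)$ times, and the sequence has $n=\dim\mathcal{A}$ terms.) *)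

theory Defs
  imports "HOL.Vector_Spaces"
begin

definition unital_algebra ::
  "('f::field \<Rightarrow> 'v::ab_group_add \<Rightarrow> 'v) \<Rightarrow> ('v \<Rightarrow> 'v \<Rightarrow> 'v) \<Rightarrow> 'v \<Rightarrow> bool" where
  "unital_algebra scale mult one \<longleftrightarrow>
     vector_space scale \<and>
     (\<forall>x y z. mult (x + y) z = mult x z + mult y z) \<and>
     (\<forall>x y z. mult x (y + z) = mult x y + mult x z) \<and>
     (\<forall>c x y. mult (scale c x) y = scale c (mult x y)) \<and>
     (\<forall>c x y. mult x (scale c y) = scale c (mult x y)) \<and>
     (\<forall>x. mult one x = x \<and> mult x one = x)"

definition fin_dim :: "('f::field \<Rightarrow> 'v::ab_group_add \<Rightarrow> 'v) \<Rightarrow> bool" where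
  "fin_dim scale \<longleftrightarrow> (\<exists>B. finite B \<and> module.span scale B = UNIV)"

text \<open>Words in S together with their length: (k, w) means w is a word of length k.
  1 is the word of length 0, elements of S are words of length 1, and a product
  (with any bracketing) of words of lengths i and j is a word of length i + j.\<close>

inductive_set words :: "('v \<Rightarrow> 'v \<Rightarrow> 'v) \<Rightarrow> 'v \<Rightarrow> 'v set \<Rightarrow> (nat \<times> 'v) set"
  for mult :: "'v \<Rightarrow> 'v \<Rightarrow> 'v" and one :: 'v and S :: "'v set" where
  word_one: "(0, one) \<in> words mult one S"
| word_gen: "s \<in> S \<Longrightarrow> (1, s) \<in> words mult one S"
| word_mult: "(i, u) \<in> words mult one S \<Longrightarrow> (j, w) \<in> words mult one S \<Longrightarrow>
      (i + j, mult u w) \<in> words mult one S"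

definition Lspace ::
  "('f::field \<Rightarrow> 'v::ab_group_add \<Rightarrow> 'v) \<Rightarrow> ('v \<Rightarrow> 'v \<Rightarrow> 'v) \<Rightarrow> 'v \<Rightarrow> 'v set \<Rightarrow> nat \<Rightarrow> 'v set" where
  "Lspace scale mult one S i = module.span scale {w. \<exists>k\<le>i. (k, w) \<in> words mult one S}"

definition generating_set ::
  "('f::field \<Rightarrow> 'v::ab_group_add \<Rightarrow> 'v) \<Rightarrow> ('v \<Rightarrow> 'v \<Rightarrow> 'v) \<Rightarrow> 'v \<Rightarrow> 'v set \<Rightarrow> bool" where
  "generating_set scale mult one S \<longleftrightarrow>
     finite S \<and> module.span scale {w. \<exists>k. (k, w) \<in> words mult one S} = UNIV"

text \<open>Characteristic sequence: each k \<ge> 1 occurs exactly dim L_k - dim L_(k-1) times and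
  m_0 = 0, the sequence being non-decreasing; equivalently m_h is the least k with
  h < dim L_k (for h < n).\<close>

definition char_seq ::
  "('f::field \<Rightarrow> 'v::ab_group_add \<Rightarrow> 'v) \<Rightarrow> ('v \<Rightarrow> 'v \<Rightarrow> 'v) \<Rightarrow> 'v \<Rightarrow> 'v set \<Rightarrow> nat \<Rightarrow> nat" where
  "char_seq scale mult one S h =
     (LEAST k. h < vector_space.dim scale (Lspace scale mult one S k))"

end

theory Submission
  imports Defs
begin


lemma pow_le_mono: "a \<le> b \<Longrightarrow> (2::nat)^a \<le> 2^b"
  by (simp add: power_increasing)

lemma pow_le_trans: "(x::nat) \<le> 2^a \<Longrightarrow> a \<le> b \<Longrightarrow> x \<le> 2^b"
  using pow_le_mono[of a b] by linarith

lemma comb_step: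
  fixes m :: "nat \<Rightarrow> nat" and h :: nat
  assumes h2: "2 \<le> h"
    and IHa: "\<And>b. 1 \<le> b \<Longrightarrow> b < h \<Longrightarrow> m b \<le> 2^(b-1)"
    and IHb: "\<And>b c. 1 \<le> b \<Longrightarrow> b < h \<Longrightarrow> m b = 2^(b-1) \<Longrightarrow> 1 \<le> c \<Longrightarrow> c \<le> b \<Longrightarrow> m c = 2^(c-1)"
    and IHc: "\<And>b. 2 \<le> b \<Longrightarrow> b < h \<Longrightarrow> 2^(b-2) < m b \<Longrightarrow> \<exists>q\<le>b-2. m b = 2^(b-2) + 2^q"
    and a1: "1 \<le> a" and ah: "a < h" and c1: "1 \<le> c" and ch: "c \<le> a"
    and mh: "m h = m a + m c"
    and big: "2^(h-2) < m h"
  shows "\<exists>q\<le>h-2. m h = 2^(h-2) + 2^q"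
proof (cases "h = 2")
  case True
  then have "a = 1" "c = 1" using a1 ah c1 ch by auto
  moreover have "m 1 \<le> 1" using IHa[of 1] h2 by simp
  ultimately show ?thesis using mh big True by auto
next
  case False
  then obtain p where hp: "h = p + 3" using h2 False by (intro that[of "h-3"]) auto
  have e1: "h - 2 = p + 1" "h - 1 = p + 2" using hp by auto
  have aeq: "a = h - 1"
  proof (rule ccontr)
    assume "a \<noteq> h - 1"
    then have "a \<le> h - 2" using ah by auto
    then have x: "a - 1 \<le> p" "c - 1 \<le> p" using ch hp by auto
    have "m a \<le> 2^p" using IHa[of a] a1 ah pow_le_mono[OF x(1)] by linarith
    moreover have "m c \<le> 2^p" using IHa[of c] c1 ch ah pow_le_mono[OF x(2)] by linarith
    ultimately
    show False using mh big e1 by auto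
  qed
  show ?thesis
  proof (cases "c = h - 1")
    case True
    have "2^p < m (h-1)" using mh big aeq True e1 by auto
    then obtain q where q: "q \<le> p" "m (h-1) = 2^p + 2^q" using IHc[of "h-1"] hp by auto
    then show ?thesis using mh aeq True e1 by (intro exI[of _ "Suc q"]) auto
  next
    case False
    then have cle: "c \<le> h - 2" using ch aeq by auto
    have mc: "m c \<le> 2^p" using pow_le_trans[OF IHa[of c], of p] c1 cle hp by auto
    have "2^p < m (h-1)" using mh big aeq mc e1 by auto
    then obtain q where q: "q \<le> p" "m (h-1) = 2^p + 2^q" using IHc[of "h-1"] hp by auto
    show ?thesis
    proof (cases "q = p")
      case True
      then have "m (h-1) = 2^(h-1-1)" using q e1 by simp
      then have "m c = 2^(c-1)" using IHb[of "h-1" c] c1 ch aeq hp by auto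
      then show ?thesis using mh aeq True q e1 c1 cle by (intro exI[of _ "c-1"]) auto
    next
      case False
      then have qp: "q < p" using q by simp
      then obtain p' where pp: "p = p' + 1" by (metis Suc_eq_plus1 less_imp_Suc_add)
      have q': "(2::nat)^q \<le> 2^p'" using qp pp pow_le_mono by simp
      have sum: "2^p < 2^q + m c" using mh aeq q big e1 by auto
      have ceq: "c = h - 2"
      proof (rule ccontr)
        assume "c \<noteq> h - 2"
        then have "c \<le> h - 3" using cle by auto
        then have "m c \<le> 2^p'" using pow_le_trans[OF IHa[of c], of p'] c1 hp pp by auto
        then show False using sum q' pp by auto
      qed
      have p2: "(2::nat)^p = 2*2^p'" by (simp add: pp)
      have "2^p' < m c" using sum q' p2 by linarith
      then obtain r where r: "r \<le> p'" "m c = 2^p' + 2^r" using IHc[of c] ceq hp pp by auto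
      show ?thesis
      proof (cases "r = p'")
        case True
        then show ?thesis using mh aeq q r pp e1 qp by (intro exI[of _ q]) auto
      next
        case False
        then have rp: "r < p'" using r by simp
        then obtain p'' where pp': "p' = p'' + 1" by (metis Suc_eq_plus1 less_imp_Suc_add)
        have r': "(2::nat)^r \<le> 2^p''" using rp pp' pow_le_mono by simp
        have qeq: "q = p'"
        proof (rule ccontr)
          assume "q \<noteq> p'"
          then have "q \<le> p''" using qp pp pp' by auto
          then have qq: "(2::nat)^q \<le> 2^p''" using pow_le_mono by simp
          have p3: "(2::nat)^p = 2*2*2^p''" "(2::nat)^p' = 2*2^p''" by (simp_all add: pp pp')
          show False using sum r(2) r' qq p3 by linarith
        qed
        then show ?thesis using mh aeq q r pp e1 by (intro exI[of _ r]) auto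
      qed
    qed
  qed
qed

lemma comb_main:
  fixes m :: "nat \<Rightarrow> nat" and N :: nat
  assumes m0: "m 0 = 0"
    and step: "\<And>h. 1 \<le> h \<Longrightarrow> h < N \<Longrightarrow> m h \<le> 1 \<or> m h = m (h-1) \<or>
       (\<exists>i j. 1 \<le> i \<and> i < h \<and> 1 \<le> j \<and> j < h \<and> m h = m i + m j)"
  shows "1 \<le> h \<Longrightarrow> h < N \<Longrightarrow> m h \<le> 2^(h-1) \<and>
     (m h = 2^(h-1) \<longrightarrow> (\<forall>c. 1 \<le> c \<and> c \<le> h \<longrightarrow> m c = 2^(c-1))) \<and>
     (2 \<le> h \<and> 2^(h-2) < m h \<longrightarrow> (\<exists>q\<le>h-2. m h = 2^(h-2) + 2^q))"
proof (induction h rule: less_induct)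
  case (less h)
  have IHa: "\<And>b. 1 \<le> b \<Longrightarrow> b < h \<Longrightarrow> m b \<le> 2^(b-1)"
  proof -
    fix b assume "1 \<le> b" "b < h"
    moreover have "b < N" using \<open>b < h\<close> less.prems by simp
    ultimately show "m b \<le> 2^(b-1)" using less.IH[of b] by blast
  qed
  have IHb: "\<And>b c. 1 \<le> b \<Longrightarrow> b < h \<Longrightarrow> m b = 2^(b-1) \<Longrightarrow> 1 \<le> c \<Longrightarrow> c \<le> b \<Longrightarrow> m c = 2^(c-1)"
  proof -
    fix b c assume "1 \<le> b" "b < h" "m b = 2^(b-1)" "1 \<le> c" "c \<le> b"
    moreover have "b < N" using \<open>b < h\<close> less.prems by simp
    ultimately show "m c = 2^(c-1)" using less.IH[of b] by blast
  qed
  have IHc: "\<And>b. 2 \<le> b \<Longrightarrow> b < h \<Longrightarrow> 2^(b-2) < m b \<Longrightarrow> \<exists>q\<le>b-2. m b = 2^(b-2) + 2^q"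
  proof -
    fix b assume "2 \<le> b" "b < h" "2^(b-2) < m b"
    moreover have "b < N" "1 \<le> b" using \<open>b < h\<close> \<open>2 \<le> b\<close> less.prems by simp_all
    ultimately show "\<exists>q\<le>b-2. m b = 2^(b-2) + 2^q" using less.IH[of b] by blast
  qed
  have p1: "(1::nat) \<le> 2^(h-2)" by simp
  consider (A) "m h \<le> 1" | (B) "m h = m (h-1)" |
     (C) i j where "1 \<le> i" "i < h" "1 \<le> j" "j < h" "m h = m i + m j"
    using step[OF less.prems] by blast
  then show ?case
  proof cases
    case A
    have "m h = 2^(h-1) \<Longrightarrow> h = 1"
    proof (rule ccontr)
      assume "m h = 2^(h-1)" "h \<noteq> 1"
      then have "h - 1 = Suc (h-2)" using less.prems by auto
      then have "(2::nat)^(h-1) \<ge> 2" by simp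
      then show False using A \<open>m h = 2^(h-1)\<close> by simp
    qed
    then show ?thesis using A p1 less.prems by (auto simp: le_Suc_eq)
  next
    case B
    show ?thesis
    proof (cases "h = 1")
      case True
      then show ?thesis using B m0 by auto
    next
      case False
      then have "m (h-1) \<le> 2^(h-1-1)" using IHa[of "h-1"] less.prems by simp
      moreover have "h - 1 - 1 = h - 2" by simp
      ultimately have "m (h-1) \<le> 2^(h-2)" by simp
      moreover have "(2::nat)^(h-1) = 2 * 2^(h-2)"
      proof -
        have "h - 1 = Suc (h-2)" using False less.prems by arith
        then show ?thesis by simp
      qed
      ultimately show ?thesis using B p1 by auto
    qed
  next
    case C
    define a where "a = max i j"
    define c where "c = min i j"
    have ac: "1 \<le> a" "a < h" "1 \<le> c" "c \<le> a" "m h = m a + m c"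
      using C unfolding a_def c_def by (auto simp: max_def min_def)
    have h2: "2 \<le> h" using ac by auto
    have hh: "(2::nat)^(h-1) = 2 * 2^(h-2)"
    proof -
      have "h - 1 = Suc (h-2)" using h2 by arith
      then show ?thesis by simp
    qed
    have ma: "m a \<le> 2^(h-2)" using pow_le_trans[OF IHa[of a]] ac by auto
    have mc: "m c \<le> 2^(h-2)" using pow_le_trans[OF IHa[of c]] ac by auto
    have partb: "\<forall>c'. 1 \<le> c' \<and> c' \<le> h \<longrightarrow> m c' = 2^(c'-1)" if eq: "m h = 2^(h-1)"
    proof -
      have "m c = 2^(h-2)" using eq hh ma mc ac by linarith
      then have "(2::nat)^(h-2) \<le> 2^(c-1)" using IHa[of c] ac by auto
      then have "h - 2 \<le> c - 1" by simp
      then have "c = h - 1" using ac by auto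
      then have mh1: "m (h-1) = 2^(h-1-1)" using \<open>m c = 2^(h-2)\<close> by (simp add: diff_diff_add)
      show ?thesis
      proof (intro allI impI)
        fix c' assume "1 \<le> c' \<and> c' \<le> h"
        then show "m c' = 2^(c'-1)"
        proof (cases "c' = h")
          case True then show ?thesis using eq by simp
        next
          case False
          then have "c' \<le> h - 1" using \<open>1 \<le> c' \<and> c' \<le> h\<close> by linarith
          moreover have "1 \<le> h - 1" "h - 1 < h" using h2 by simp_all
          ultimately show ?thesis using IHb[OF _ _ mh1, of c'] \<open>1 \<le> c' \<and> c' \<le> h\<close> by blast
        qed
      qed
    qed
    have "m h \<le> 2^(h-1)" using ma mc hh ac(5) by linarith
    moreover have "2 \<le> h \<and> 2^(h-2) < m h \<longrightarrow> (\<exists>q\<le>h-2. m h = 2^(h-2) + 2^q)"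
    proof
      assume "2 \<le> h \<and> 2^(h-2) < m h"
      then have hb: "2^(h-2) < m h" by simp
      show "\<exists>q\<le>h-2. m h = 2^(h-2) + 2^q"
        by (rule comb_step[of h m a c, OF h2 _ _ _ ac(1) ac(2) ac(3) ac(4) ac(5) hb])
           (fact IHa, fact IHb, fact IHc)
    qed
    ultimately show ?thesis using partb by blast
  qed
qed




locale nalg = finite_dimensional_vector_space scale Basis
  for scale :: "'f::field \<Rightarrow> 'v::ab_group_add \<Rightarrow> 'v" and Basis :: "'v set" +
  fixes mult :: "'v \<Rightarrow> 'v \<Rightarrow> 'v" and one :: 'v and S :: "'v set"
  assumes ladd: "\<And>x y z. mult (x + y) z = mult x z + mult y z"
    and radd: "\<And>x y z. mult x (y + z) = mult x y + mult x z"
    and lsc: "\<And>c x y. mult (scale c x) y = scale c (mult x y)"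
    and rsc: "\<And>c x y. mult x (scale c y) = scale c (mult x y)"
    and lone: "\<And>x. mult one x = x" and rone: "\<And>x. mult x one = x"
    and gen: "span {w. \<exists>k. (k, w) \<in> words mult one S} = UNIV"
    and one_nz: "one \<noteq> 0"
begin

abbreviation L where "L k \<equiv> Lspace scale mult one S k"

lemma L_eq: "L k = span {w. \<exists>k'\<le>k. (k', w) \<in> words mult one S}"
  by (simp add: Lspace_def)

lemma mult0l: "mult 0 y = 0"
  using ladd[of 0 0 y] by simp

lemma mult0r: "mult y 0 = 0"
  using radd[of y 0 0] by simp

lemma L_add: "x \<in> L k \<Longrightarrow> y \<in> L k \<Longrightarrow> x + y \<in> L k"
  unfolding L_eq by (rule span_add)

lemma L_scale: "x \<in> L k \<Longrightarrow> scale c x \<in> L k"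
  unfolding L_eq by (rule span_scale)

lemma L_zero: "0 \<in> L k"
  unfolding L_eq by (rule span_zero)

lemma word_in_L: "(k, w) \<in> words mult one S \<Longrightarrow> k \<le> p \<Longrightarrow> w \<in> L p"
  unfolding L_eq by (rule span_base) auto

lemma L_mono: "p \<le> q \<Longrightarrow> L p \<subseteq> L q"
  unfolding L_eq by (rule span_mono) (auto intro: le_trans)

lemma word_mult_L:
  assumes a: "(ka, a) \<in> words mult one S" "ka \<le> p" and y: "y \<in> L q"
  shows "mult a y \<in> L (p + q)"
  using y unfolding L_eq[of q]
proof (induction rule: span_induct_alt)
  case base
  then show ?case by (simp add: mult0r L_eq span_zero)
next
  case (step c b y')
  then obtain kb where kb: "kb \<le> q" "(kb, b) \<in> words mult one S" by auto
  have "(ka + kb, mult a b) \<in> words mult one S" using a kb by (intro words.word_mult)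
  then have "mult a b \<in> L (p + q)" using a kb by (intro word_in_L) auto
  then show ?case using step by (simp add: radd rsc L_add L_scale)
qed

lemma mult_L:
  assumes x: "x \<in> L p" and y: "y \<in> L q"
  shows "mult x y \<in> L (p + q)"
  using x unfolding L_eq[of p]
proof (induction rule: span_induct_alt)
  case base
  then show ?case by (simp add: mult0l L_eq span_zero)
next
  case (step c a x')
  then obtain ka where "ka \<le> p" "(ka, a) \<in> words mult one S" by auto
  then have "mult a y \<in> L (p + q)" using y by (intro word_mult_L)
  then show ?case using step by (simp add: ladd lsc L_add L_scale)
qed

lemma words0: "(k, w) \<in> words mult one S \<Longrightarrow> k = 0 \<Longrightarrow> w = one"
  by (induction rule: words.induct) (auto simp: lone)

lemma words2: "(k, w) \<in> words mult one S \<Longrightarrow> 2 \<le> k \<Longrightarrow>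
   \<exists>a b u v. 1 \<le> a \<and> 1 \<le> b \<and> a + b = k \<and> (a, u) \<in> words mult one S \<and>
     (b, v) \<in> words mult one S \<and> w = mult u v"
proof (induction rule: words.induct)
  case word_one
  then show ?case by simp
next
  case (word_gen s)
  then show ?case by simp
next
  case (word_mult i u j w)
  show ?case
  proof (cases "i = 0")
    case True
    then have "u = one" using word_mult words0 by blast
    then show ?thesis using word_mult True by (simp add: lone)
  next
    case False
    show ?thesis
    proof (cases "j = 0")
      case True
      then have "w = one" using word_mult words0 by blast
      then show ?thesis using word_mult True by (simp add: rone)
    next
      case False
      then show ?thesis using \<open>i \<noteq> 0\<close> word_mult by (intro exI[of _ i] exI[of _ j] exI[of _ u] exI[of _ w]) auto
    qed
  qed
qed

lemma L0: "L 0 = span {one}"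
proof -
  have "{w. \<exists>k'\<le>0. (k', w) \<in> words mult one S} = {one}"
    using words0 words.word_one by auto
  then show ?thesis by (simp add: L_eq)
qed

lemma D0: "dim (L 0) = 1"
  using one_nz by (simp add: L0 dim_span)

lemma all_in_some_L: "\<exists>k. x \<in> L k"
proof -
  have "x \<in> span {w. \<exists>k. (k, w) \<in> words mult one S}" using gen by simp
  then show ?thesis
  proof (induction rule: span_induct_alt)
    case base
    then show ?case using L_zero by blast
  next
    case (step c a y)
    then obtain ka ky where "(ka, a) \<in> words mult one S" "y \<in> L ky" by auto
    then have "a \<in> L (max ka ky)" "y \<in> L (max ka ky)"
      using word_in_L L_mono[of ky "max ka ky"] by auto
    then show ?case by (blast intro: L_add L_scale)
  qed
qed

lemma finite_in_some_L: "finite B \<Longrightarrow> \<exists>k. B \<subseteq> L k"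
proof (induction rule: finite_induct)
  case empty
  then show ?case by simp
next
  case (insert x F)
  then obtain k where k: "F \<subseteq> L k" by blast
  obtain k' where k': "x \<in> L k'" using all_in_some_L by blast
  have "F \<subseteq> L (max k k')" "x \<in> L (max k k')"
    using k k' L_mono[of k "max k k'"] L_mono[of k' "max k k'"] by auto
  then show ?case by blast
qed

lemma exists_full: "\<exists>K. L K = UNIV"
proof -
  obtain K where "Basis \<subseteq> L K" using finite_in_some_L finite_Basis by blast
  then have "span Basis \<subseteq> span (L K)" by (rule span_mono)
  then have "UNIV \<subseteq> L K" using span_Basis by (simp add: L_eq span_span)
  then show ?thesis by blast
qed

lemma key:
  assumes k2: "2 \<le> k" and ps: "L (k-1) \<subset> L k"
  shows "\<exists>a b. 1 \<le> a \<and> 1 \<le> b \<and> a + b = k \<and> L (a-1) \<subset> L a \<and> L (b-1) \<subset> L b"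
proof -
  have "\<not> {w. \<exists>k'\<le>k. (k', w) \<in> words mult one S} \<subseteq> L (k-1)"
  proof
    assume "{w. \<exists>k'\<le>k. (k', w) \<in> words mult one S} \<subseteq> L (k-1)"
    then have "L k \<subseteq> L (k-1)" unfolding L_eq[of k] by (intro span_minimal) (auto simp: L_eq)
    then show False using ps by blast
  qed
  then obtain k' w where w: "k' \<le> k" "(k', w) \<in> words mult one S" "w \<notin> L (k-1)" by blast
  have "k' = k"
  proof (rule ccontr)
    assume "k' \<noteq> k"
    then have "k' \<le> k - 1" using w by auto
    then show False using w word_in_L by blast
  qed
  then obtain a b u v where ab: "1 \<le> a" "1 \<le> b" "a + b = k" "(a, u) \<in> words mult one S"
     "(b, v) \<in> words mult one S" "w = mult u v"
    using words2[OF w(2)] k2 by blast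
  have u: "u \<in> L a" and v: "v \<in> L b" using ab word_in_L by auto
  have "u \<notin> L (a-1)"
  proof
    assume "u \<in> L (a-1)"
    then have "mult u v \<in> L (a - 1 + b)" using v by (rule mult_L)
    moreover have "a - 1 + b = k - 1" using ab by auto
    ultimately show False using w ab by simp
  qed
  moreover have "v \<notin> L (b-1)"
  proof
    assume "v \<in> L (b-1)"
    then have "mult u v \<in> L (a + (b - 1))" using u by (intro mult_L)
    moreover have "a + (b - 1) = k - 1" using ab by auto
    ultimately show False using w ab by simp
  qed
  ultimately have "L (a-1) \<subset> L a" "L (b-1) \<subset> L b"
    using u v L_mono[of "a-1" a] L_mono[of "b-1" b] by auto
  then show ?thesis using ab by blast
qed

lemma D_mono: "p \<le> q \<Longrightarrow> dim (L p) \<le> dim (L q)"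
  by (intro dim_subset L_mono)

lemma D_strict: "L p \<subset> L q \<Longrightarrow> dim (L p) < dim (L q)"
  by (rule dim_psubset) (simp add: L_eq span_span)

abbreviation m where "m h \<equiv> char_seq scale mult one S h"

lemma m_eq: "m h = (LEAST k. h < dim (L k))"
  by (simp add: char_seq_def)

lemma m_spec:
  assumes "h < dim (UNIV::'v set)"
  shows "h < dim (L (m h))" and "\<And>k. k < m h \<Longrightarrow> dim (L k) \<le> h"
proof -
  obtain K where "L K = UNIV" using exists_full by blast
  then have ex: "h < dim (L K)" using assms by simp
  show "h < dim (L (m h))" unfolding m_eq by (rule LeastI[of _ K]) (rule ex)
  show "\<And>k. k < m h \<Longrightarrow> dim (L k) \<le> h" unfolding m_eq using not_less_Least by (metis not_le)
qed

lemma m0: "m 0 = 0"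
  unfolding m_eq using D0 by (intro Least_eq_0) simp

lemma m_step:
  assumes h1: "1 \<le> h" and hn: "h < dim (UNIV::'v set)"
  shows "m h \<le> 1 \<or> m h = m (h-1) \<or> (\<exists>i j. 1 \<le> i \<and> i < h \<and> 1 \<le> j \<and> j < h \<and> m h = m i + m j)"
proof (cases "m h \<le> 1")
  case True
  then show ?thesis by simp
next
  case False
  define k where "k = m h"
  have k2: "2 \<le> k" using False k_def by simp
  have Dk: "h < dim (L k)" using m_spec(1)[OF hn] k_def by simp
  have Dk1: "dim (L (k-1)) \<le> h" using m_spec(2)[OF hn, of "k-1"] k_def k2 by simp
  have "L (k-1) \<subset> L k" using L_mono[of "k-1" k] Dk Dk1 by auto
  then obtain a b where ab: "1 \<le> a" "1 \<le> b" "a + b = k" "L (a-1) \<subset> L a" "L (b-1) \<subset> L b"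
    using key k2 by blast
  have cl: "m (dim (L (c-1))) = c \<and> 1 \<le> dim (L (c-1)) \<and> dim (L (c-1)) < h"
    if c: "1 \<le> c" "c \<le> k - 1" "L (c-1) \<subset> L c" for c
  proof -
    have lt: "dim (L (c-1)) < dim (L c)" using D_strict c(3) .
    have "m (dim (L (c-1))) = c" unfolding m_eq
    proof (rule Least_equality)
      show "dim (L (c - 1)) < dim (L c)" by (rule lt)
    next
      fix y assume y: "dim (L (c - 1)) < dim (L y)"
      show "c \<le> y"
      proof (rule ccontr)
        assume "\<not> c \<le> y"
        then have "dim (L y) \<le> dim (L (c-1))" using D_mono[of y "c-1"] by simp
        then show False using y by simp
      qed
    qed
    moreover have "1 \<le> dim (L (c-1))" using D0 D_mono[of 0 "c-1"] by simp
    moreover have "dim (L c) \<le> dim (L (k-1))" using D_mono c by simp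
    ultimately show ?thesis using lt Dk1 by simp
  qed
  have "a \<le> k - 1" "b \<le> k - 1" using ab by auto
  then have "m (dim (L (a-1))) = a \<and> 1 \<le> dim (L (a-1)) \<and> dim (L (a-1)) < h"
    "m (dim (L (b-1))) = b \<and> 1 \<le> dim (L (b-1)) \<and> dim (L (b-1)) < h"
    using cl ab by auto
  then show ?thesis using ab k_def by metis
qed

end

theorem theorem4p2:
  fixes scale :: "'f::field \<Rightarrow> 'v::ab_group_add \<Rightarrow> 'v"
    and mult :: "'v \<Rightarrow> 'v \<Rightarrow> 'v" and one :: 'v and S :: "'v set" and n h :: nat
  assumes "unital_algebra scale mult one"
    and "fin_dim scale"
    and "vector_space.dim scale (UNIV :: 'v set) = n"
    and "n > 4"
    and "generating_set scale mult one S"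
    and "4 \<le> h" and "h \<le> n - 1"
    and "char_seq scale mult one S h > 2 ^ (h - 2)"
  shows "\<exists>q \<le> h - 2. char_seq scale mult one S h = 2 ^ (h - 2) + 2 ^ q"
proof -
  have vs: "vector_space scale" using assms(1) by (simp add: unital_algebra_def)
  have ax: "\<And>x y z. mult (x + y) z = mult x z + mult y z"
    "\<And>x y z. mult x (y + z) = mult x y + mult x z"
    "\<And>c x y. mult (scale c x) y = scale c (mult x y)"
    "\<And>c x y. mult x (scale c y) = scale c (mult x y)"
    "\<And>x. mult one x = x" "\<And>x. mult x one = x"
    using assms(1) by (simp_all add: unital_algebra_def)
  obtain B where B: "finite B" "module.span scale B = UNIV" using assms(2) by (auto simp: fin_dim_def)
  interpret vector_space scale by (rule vs)
  obtain B' where B': "B' \<subseteq> B" "independent B'" "B \<subseteq> span B'"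
    using maximal_independent_subset[of B] by blast
  have spanB': "span B' = UNIV"
  proof -
    have "span B \<subseteq> span (span B')" using B'(3) by (rule span_mono)
    then show ?thesis using B(2) by (auto simp: span_span)
  qed
  interpret fd: finite_dimensional_vector_space scale B'
    by (intro finite_dimensional_vector_space.intro vs finite_dimensional_vector_space_axioms.intro
        B'(2) spanB' finite_subset[OF B'(1) B(1)])
  have one_nz: "one \<noteq> 0"
  proof
    assume "one = 0"
    have z: "\<And>z. mult 0 z = 0" using ax(1)[of 0 0] by simp
    have "\<And>x::'v. x = 0"
    proof -
      fix x :: 'v show "x = 0" using ax(5)[of x] z[of x] \<open>one = 0\<close> by simp
    qed
    then have "(UNIV::'v set) = {0}" by auto
    then have "dim (UNIV::'v set) = 0" using fd.dim_singleton[of 0] by (simp del: fd.dim_UNIV)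
    then show False using assms(3) assms(4) by simp
  qed
  interpret nalg scale B' mult one S
    by (intro nalg.intro fd.finite_dimensional_vector_space_axioms nalg_axioms.intro ax one_nz)
       (use assms(5) in \<open>simp add: generating_set_def\<close>)
  have "dim (UNIV :: 'v set) = n" using assms(3) by simp
  have main: "\<And>h. 1 \<le> h \<Longrightarrow> h < n \<Longrightarrow> m h \<le> 2^(h-1) \<and>
     (m h = 2^(h-1) \<longrightarrow> (\<forall>c. 1 \<le> c \<and> c \<le> h \<longrightarrow> m c = 2^(c-1))) \<and>
     (2 \<le> h \<and> 2^(h-2) < m h \<longrightarrow> (\<exists>q\<le>h-2. m h = 2^(h-2) + 2^q))"
    by (rule comb_main[of "\<lambda>h. m h" n, OF m0]) (use m_step assms(3) in auto)
  show ?thesis using main[of h] assms(4) assms(6) assms(7) assms(8) by auto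
qed

end
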